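(* Let $G$ be a nonempty countable graph not containing $K_\omega$ as a subgraph. Then the graph $K_\omega^{<{\rm rk}(G)+1>}$ admits no homomorphism into $G$.
   Context: All graphs are simple and loopless; homomorphisms are edge-preserving vertex maps. $K_n$ is the complete graph on $\{0,\dots,n-1\}$, $K_\omega$ the countably infinite complete graph. For a graph $G$ not containing $K_\omega$, $T^G$ is the set of all homomorphisms $K_n\to G$, $n\ge 1$, ordered by extension; ${\rm rk}(f)=\sup\{{\rm rk}(g)+1: g \text{ immediate successor of } f\}$ and ${\rm rk}(G)=\sup\{{\rm rk}(f)+1: f \text{ minimal in } T^G\}$. For an ordinal $\alpha$, $K_\omega^{<\alpha>}$ is the graph whose vertices are all finite strictly decreasing sequences of ordinals $<\alpha$ (including the empty sequence), two distinct sequences being adjacent iff one is an initial segment of the other. *)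

theory Defs
  imports Main "HOL-Library.Sublist" "HOL-Library.Countable_Set"
begin

definition simple_graph :: "'v set \<Rightarrow> ('v \<Rightarrow> 'v \<Rightarrow> bool) \<Rightarrow> bool" where
  "simple_graph V E \<longleftrightarrow> (\<forall>x y. E x y \<longrightarrow> x \<in> V \<and> y \<in> V \<and> x \<noteq> y \<and> E y x)"

text \<open>G contains K_omega as a subgraph (equivalently: there is a homomorphism K_omega -> G,
  which is automatically injective since graphs are loopless).\<close>
definition contains_Komega :: "'v set \<Rightarrow> ('v \<Rightarrow> 'v \<Rightarrow> bool) \<Rightarrow> bool" where
  "contains_Komega V E \<longleftrightarrow>
     (\<exists>f :: nat \<Rightarrow> 'v. inj f \<and> range f \<subseteq> V \<and> (\<forall>i j. i \<noteq> j \<longrightarrow> E (f i) (f j)))"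

text \<open>T^G: homomorphisms K_n -> G (n >= 1), represented as the list [f 0, ..., f (n-1)].\<close>
definition homK :: "'v set \<Rightarrow> ('v \<Rightarrow> 'v \<Rightarrow> bool) \<Rightarrow> 'v list set" where
  "homK V E = {xs. length xs \<ge> 1 \<and> set xs \<subseteq> V \<and>
      (\<forall>i<length xs. \<forall>j<length xs. i \<noteq> j \<longrightarrow> E (xs ! i) (xs ! j))}"

definition imm_succ :: "'v set \<Rightarrow> ('v \<Rightarrow> 'v \<Rightarrow> bool) \<Rightarrow> 'v list \<Rightarrow> 'v list set" where
  "imm_succ V E f = {g \<in> homK V E. prefix f g \<and> length g = Suc (length f)}"

text \<open>Ordinals are measured inside a well-order w (its initial segments are the ordinals).
  x is the least element of Field w strictly above every element of A, i.e. sup {a+1 : a in A}.\<close>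
definition strict_ub :: "'o rel \<Rightarrow> 'o set \<Rightarrow> 'o \<Rightarrow> bool" where
  "strict_ub w A x \<longleftrightarrow> x \<in> Field w \<and> (\<forall>a\<in>A. a \<noteq> x \<and> (a, x) \<in> w)"

definition least_strict_ub :: "'o rel \<Rightarrow> 'o set \<Rightarrow> 'o \<Rightarrow> bool" where
  "least_strict_ub w A x \<longleftrightarrow> strict_ub w A x \<and> (\<forall>y. strict_ub w A y \<longrightarrow> (x, y) \<in> w)"

definition is_rank_fn :: "'v set \<Rightarrow> ('v \<Rightarrow> 'v \<Rightarrow> bool) \<Rightarrow> 'o rel \<Rightarrow> ('v list \<Rightarrow> 'o) \<Rightarrow> bool" where
  "is_rank_fn V E w \<rho> \<longleftrightarrow>
     (\<forall>f \<in> homK V E. least_strict_ub w (\<rho> ` imm_succ V E f) (\<rho> f))"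

text \<open>beta represents rk(G) = sup { rk(f)+1 : f minimal in T^G } in w;
  the minimal elements of T^G are the homomorphisms from K_1.\<close>
definition is_graph_rank :: "'v set \<Rightarrow> ('v \<Rightarrow> 'v \<Rightarrow> bool) \<Rightarrow> 'o rel \<Rightarrow> ('v list \<Rightarrow> 'o) \<Rightarrow> 'o \<Rightarrow> bool" where
  "is_graph_rank V E w \<rho> \<beta> \<longleftrightarrow>
     least_strict_ub w (\<rho> ` {f \<in> homK V E. length f = 1}) \<beta>"

text \<open>K_omega^{<beta+1>}: finite strictly decreasing sequences of ordinals <= beta
  (i.e. elements of Field w that are w-below-or-equal beta), adjacency = proper
  initial segment relation.\<close>
definition Kseq_vert :: "'o rel \<Rightarrow> 'o \<Rightarrow> 'o list set" where
  "Kseq_vert w \<beta> = {s. (\<forall>x\<in>set s. (x, \<beta>) \<in> w) \<and>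
       sorted_wrt (\<lambda>a b. (b, a) \<in> w \<and> a \<noteq> b) s}"

definition Kseq_adj :: "'o list \<Rightarrow> 'o list \<Rightarrow> bool" where
  "Kseq_adj s t \<longleftrightarrow> s \<noteq> t \<and> (prefix s t \<or> prefix t s)"

definition graph_hom :: "'a set \<Rightarrow> ('a \<Rightarrow> 'a \<Rightarrow> bool) \<Rightarrow> 'v set \<Rightarrow> ('v \<Rightarrow> 'v \<Rightarrow> bool) \<Rightarrow> ('a \<Rightarrow> 'v) \<Rightarrow> bool" where
  "graph_hom A R V E h \<longleftrightarrow> (\<forall>x\<in>A. h x \<in> V) \<and> (\<forall>x\<in>A. \<forall>y\<in>A. R x y \<longrightarrow> E (h x) (h y))"

end

theory Submission
  imports Defs
begin

definition cl :: "('o list \<Rightarrow> 'v) \<Rightarrow> 'o list \<Rightarrow> 'v list" where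
  "cl h s = map (\<lambda>i. h (take i s)) [0..<Suc (length s)]"

lemma cl_snoc: "cl h (s @ [a]) = cl h s @ [h (s @ [a])]"
  unfolding cl_def by simp

lemma take_prefix_le: "i \<le> j \<Longrightarrow> prefix (take i s) (take j s)"
  by (metis min.absorb1 take_is_prefix take_take)

lemma Kseq_take: "s \<in> Kseq_vert w \<beta> \<Longrightarrow> take i s \<in> Kseq_vert w \<beta>"
  unfolding Kseq_vert_def using set_take_subset[of i s] sorted_wrt_take by blast

lemma cl_homK:
  assumes hom: "graph_hom (Kseq_vert w \<beta>) Kseq_adj V E h" and s: "s \<in> Kseq_vert w \<beta>"
  shows "cl h s \<in> homK V E"
proof -
  have "set (cl h s) \<subseteq> V" using hom Kseq_take[OF s] s unfolding cl_def graph_hom_def by auto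
  moreover have "E (cl h s ! i) (cl h s ! j)"
    if "i < length (cl h s)" "j < length (cl h s)" "i \<noteq> j" for i j
  proof -
    have ij: "i \<le> length s" "j \<le> length s" using that unfolding cl_def by auto
    have ne: "take i s \<noteq> take j s" using ij that(3)
      by (metis length_take min.absorb2)
    have "Kseq_adj (take i s) (take j s)" unfolding Kseq_adj_def
      using ne take_prefix_le[of i j s] take_prefix_le[of j i s] by (cases "i \<le> j") auto
    then have "E (h (take i s)) (h (take j s))"
      using hom Kseq_take[OF s] unfolding graph_hom_def by blast
    then show ?thesis using ij unfolding cl_def
      by (simp del: upt_Suc add: nth_map_upt)
  qed
  moreover have "length (cl h s) \<ge> 1" unfolding cl_def by simp
  ultimately show ?thesis unfolding homK_def by blast
qed

theorem mainTheorem6: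
  fixes V :: "'v set" and E :: "'v \<Rightarrow> 'v \<Rightarrow> bool"
    and w :: "'o rel" and \<rho> :: "'v list \<Rightarrow> 'o" and \<beta> :: 'o
  assumes "simple_graph V E"
    and "V \<noteq> {}"
    and "countable V"
    and "\<not> contains_Komega V E"
    and wo: "Well_order w"
    and rk: "is_rank_fn V E w \<rho>"
    and gr: "is_graph_rank V E w \<rho> \<beta>"
  shows "\<not> (\<exists>h :: 'o list \<Rightarrow> 'v. graph_hom (Kseq_vert w \<beta>) Kseq_adj V E h)"
proof
  assume "\<exists>h. graph_hom (Kseq_vert w \<beta>) Kseq_adj V E h"
  then obtain h where hom: "graph_hom (Kseq_vert w \<beta>) Kseq_adj V E h" by blast
  have wf: "wf (w - Id)" using wo unfolding well_order_on_def by blast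
  have trans: "trans w" and antisym: "antisym w" and refl: "refl_on (Field w) w"
    using wo unfolding well_order_on_def linear_order_on_def partial_order_on_def preorder_on_def
    by auto
  have \<beta>F: "\<beta> \<in> Field w" using gr unfolding is_graph_rank_def least_strict_ub_def strict_ub_def
    by blast
  have \<beta>\<beta>: "(\<beta>, \<beta>) \<in> w" using refl \<beta>F by (meson refl_onD)
  define bd where "bd s = (if s = [] then \<beta> else last s)" for s :: "'o list"
  have main: "\<forall>s. s \<in> Kseq_vert w \<beta> \<longrightarrow> \<rho> (cl h s) = \<alpha> \<longrightarrow> (\<alpha>, bd s) \<in> w - Id \<longrightarrow> False"
    for \<alpha>
  proof (induction \<alpha> rule: wf_induct_rule[OF wf])
    case (1 \<alpha>)
    show ?case
    proof (intro allI impI)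
      fix s assume s: "s \<in> Kseq_vert w \<beta>" and a: "\<rho> (cl h s) = \<alpha>" and ab: "(\<alpha>, bd s) \<in> w - Id"
      define s' where "s' = s @ [\<alpha>]"
      have bd\<beta>: "(bd s, \<beta>) \<in> w"
        using s \<beta>\<beta> unfolding bd_def Kseq_vert_def by auto
      have below: "(bd s, x) \<in> w" if "x \<in> set s" for x
      proof -
        have "s \<noteq> []" using that by auto
        then obtain ys where ys: "s = ys @ [last s]" by (metis append_butlast_last_id)
        have sw: "sorted_wrt (\<lambda>a b. (b, a) \<in> w \<and> a \<noteq> b) s" using s unfolding Kseq_vert_def by blast
        show ?thesis
        proof (cases "x = last s")
          case True
          have "last s \<in> Field w" using s \<open>s \<noteq> []\<close> True that unfolding Kseq_vert_def
            by (auto intro: FieldI1)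
          then show ?thesis using True refl \<open>s \<noteq> []\<close> unfolding bd_def by (simp add: refl_onD)
        next
          case False
          then have xy: "x \<in> set ys" using that ys by (metis rotate1.simps(2) set_ConsD set_rotate1)
          have "sorted_wrt (\<lambda>a b. (b, a) \<in> w \<and> a \<noteq> b) (ys @ [last s])" using sw ys by simp
          then have "\<forall>x\<in>set ys. (last s, x) \<in> w" by (simp add: sorted_wrt_append)
          then show ?thesis using xy \<open>s \<noteq> []\<close> unfolding bd_def by simp
        qed
      qed
      have s'K: "s' \<in> Kseq_vert w \<beta>"
      proof -
        have "(\<alpha>, \<beta>) \<in> w" using ab bd\<beta> trans by (meson DiffD1 transE)
        moreover have "(\<alpha>, x) \<in> w \<and> x \<noteq> \<alpha>" if "x \<in> set s" for x
        proof -
          have "(\<alpha>, x) \<in> w" using ab below[OF that] trans by (meson DiffD1 transE)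
          moreover have "x \<noteq> \<alpha>"
          proof
            assume "x = \<alpha>"
            then have "\<alpha> = bd s" using below[OF that] ab antisym by (meson DiffD1 antisymD)
            then show False using ab by auto
          qed
          ultimately show ?thesis by blast
        qed
        ultimately show ?thesis using s unfolding Kseq_vert_def s'_def
          by (auto simp: sorted_wrt_append)
      qed
      have "cl h s' \<in> imm_succ V E (cl h s)"
        unfolding imm_succ_def s'_def using cl_homK[OF hom s'K] cl_snoc[of h s \<alpha>]
        by (auto simp: s'_def)
      moreover have "cl h s \<in> homK V E" using cl_homK[OF hom s] .
      ultimately have "(\<rho> (cl h s'), \<alpha>) \<in> w - Id"
        using rk a unfolding is_rank_fn_def least_strict_ub_def strict_ub_def by blast
      moreover have "bd s' = \<alpha>" unfolding bd_def s'_def by simp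
      ultimately show False using 1 s'K by blast
    qed
  qed
  have "cl h [] \<in> homK V E" using cl_homK[OF hom] by (simp add: Kseq_vert_def)
  moreover have "length (cl h []) = 1" by (simp add: cl_def)
  ultimately have "(\<rho> (cl h []), \<beta>) \<in> w - Id"
    using gr unfolding is_graph_rank_def least_strict_ub_def strict_ub_def by blast
  moreover have "[] \<in> Kseq_vert w \<beta>" by (simp add: Kseq_vert_def)
  ultimately show False using main[of "\<rho> (cl h [])"] unfolding bd_def by auto
qed

end
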